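(* Let $\mathscr{a}\in\mathbb{R}$, $\mathscr{b}\in(\mathscr{a},\infty)$, $\rho\in(0,\infty)$, $f\in C([\mathscr{a},\mathscr{b}],\mathbb{R})$, for $\theta=(\theta_1,\theta_2,\theta_3,\theta_4)\in\mathbb{R}^4$ and $x\in\mathbb{R}$ let $\mathscr{N}^\theta(x)=\theta_3\max\{\theta_1x+\theta_2,0\}+\theta_4$ and $\mathcal{L}(\theta)=\rho\int_{\mathscr{a}}^{\mathscr{b}}(\mathscr{N}^\theta(y)-f(y))^2\,\mathrm{d}y$, and let $m\in\mathbb{R}$, $\varepsilon\in(0,\infty)$ satisfy $m=\rho\int_{\mathscr{a}}^{\mathscr{b}}\big(f(x)-(\mathscr{b}-\mathscr{a})^{-1}\int_{\mathscr{a}}^{\mathscr{b}}f(y)\,\mathrm{d}y\big)^2\,\mathrm{d}x$. Then there exists $\mathfrak{C}\in(0,\infty)$ such that for all $\theta\in\mathbb{R}^4$ with $\mathcal{L}(\theta)\le m-\varepsilon$ it holds that $\mathfrak{C}^{-1}\le|\theta_1\theta_3|\le\mathfrak{C}$. *)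

theory Defs
  imports "HOL-Analysis.Analysis"
begin

definition realization :: "real \<Rightarrow> real \<Rightarrow> real \<Rightarrow> real \<Rightarrow> real \<Rightarrow> real" where
  "realization t1 t2 t3 t4 x = t3 * max (t1 * x + t2) 0 + t4"

definition risk :: "real \<Rightarrow> real \<Rightarrow> real \<Rightarrow> (real \<Rightarrow> real) \<Rightarrow> real \<Rightarrow> real \<Rightarrow> real \<Rightarrow> real \<Rightarrow> real" where
  "risk a b \<rho> f t1 t2 t3 t4 = \<rho> * integral {a..b} (\<lambda>y. (realization t1 t2 t3 t4 y - f y)^2)"

end

theory Submission
  imports Defs
begin

lemma var_lower:
  fixes f :: "real \<Rightarrow> real" and a b c :: real
  assumes ab: "a < b" and fc: "continuous_on {a..b} f"
  shows "integral {a..b} (\<lambda>x. (f x - integral {a..b} f / (b - a))^2) \<le> integral {a..b} (\<lambda>x. (c - f x)^2)"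
proof -
  define \<mu> where "\<mu> = integral {a..b} f / (b - a)"
  have fi: "f integrable_on {a..b}" by (rule integrable_continuous_interval[OF fc])
  have gi: "(\<lambda>x. (f x - \<mu>)^2) integrable_on {a..b}"
    by (rule integrable_continuous_interval) (intro continuous_intros fc)
  have hi: "(\<lambda>x. f x - \<mu>) integrable_on {a..b}"
    by (rule integrable_continuous_interval) (intro continuous_intros fc)
  have h0: "integral {a..b} (\<lambda>x. f x - \<mu>) = 0"
  proof -
    have "integral {a..b} (\<lambda>x. f x - \<mu>) = integral {a..b} f - integral {a..b} (\<lambda>x. \<mu>)"
      by (rule integral_diff[OF fi]) (rule integrable_continuous_interval, simp)
    also have "\<dots> = 0" using ab by (simp add: content_real \<mu>_def)
    finally show ?thesis .
  qed
  have eq: "(\<lambda>x. (c - f x)^2) = (\<lambda>x. ((f x - \<mu>)^2 + (2*(\<mu> - c)) * (f x - \<mu>)) + (\<mu> - c)^2)"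
    by (auto simp: fun_eq_iff power2_eq_square algebra_simps)
  have "integral {a..b} (\<lambda>x. (c - f x)^2) = integral {a..b} (\<lambda>x. (f x - \<mu>)^2) + (2*(\<mu> - c)) * integral {a..b} (\<lambda>x. f x - \<mu>) + (b - a) * (\<mu> - c)^2"
  proof -
    have i1: "(\<lambda>x. (f x - \<mu>)^2 + (2*(\<mu> - c)) * (f x - \<mu>)) integrable_on {a..b}"
      by (rule integrable_continuous_interval) (intro continuous_intros fc)
    have i2: "(\<lambda>x. (2*(\<mu> - c)) * (f x - \<mu>)) integrable_on {a..b}"
      by (rule integrable_continuous_interval) (intro continuous_intros fc)
    have i3: "(\<lambda>x. (\<mu> - c)^2) integrable_on {a..b}"
      by (rule integrable_continuous_interval) (intro continuous_intros fc)
    have "integral {a..b} (\<lambda>x. ((f x - \<mu>)^2 + (2*(\<mu> - c)) * (f x - \<mu>)) + (\<mu> - c)^2)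
       = integral {a..b} (\<lambda>x. (f x - \<mu>)^2 + (2*(\<mu> - c)) * (f x - \<mu>)) + integral {a..b} (\<lambda>x. (\<mu> - c)^2)"
      by (rule integral_add[OF i1 i3])
    also have "integral {a..b} (\<lambda>x. (f x - \<mu>)^2 + (2*(\<mu> - c)) * (f x - \<mu>)) = integral {a..b} (\<lambda>x. (f x - \<mu>)^2) + integral {a..b} (\<lambda>x. (2*(\<mu> - c)) * (f x - \<mu>))"
      by (rule integral_add[OF gi i2])
    also have "integral {a..b} (\<lambda>x. (2*(\<mu> - c)) * (f x - \<mu>)) = (2*(\<mu> - c)) * integral {a..b} (\<lambda>x. f x - \<mu>)"
      by simp
    also have "integral {a..b} (\<lambda>x. (\<mu> - c)^2) = (b - a) * (\<mu> - c)^2" using ab by (simp add: content_real)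
    finally show ?thesis unfolding eq .
  qed
  also have "\<dots> \<ge> integral {a..b} (\<lambda>x. (f x - \<mu>)^2)"
    using ab by (simp add: h0 content_real)
  finally show ?thesis unfolding \<mu>_def by simp
qed

lemma ind_integral:
  fixes a b p q :: real
  assumes "p \<le> q"
  shows "(\<lambda>x. if x \<in> {p..q} then (1::real) else 0) integrable_on {a..b}"
    and "integral {a..b} (\<lambda>x. if x \<in> {p..q} then (1::real) else 0) \<le> q - p"
proof -
  have "((\<lambda>x. if x \<in> {p..q} then (1::real) else 0) has_integral measure lborel {max p a..min q b} *\<^sub>R 1) {a..b}"
  proof -
    have "{p..q} \<inter> {a..b} = {max p a..min q b}" by auto
    then show ?thesis unfolding has_integral_restrict_Int by (metis has_integral_const_real)
  qed
  moreover have "measure lborel {max p a..min q b} \<le> q - p"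
    using assms by (cases "max p a \<le> min q b") (auto simp: content_real)
  ultimately show "(\<lambda>x. if x \<in> {p..q} then (1::real) else 0) integrable_on {a..b}"
    and "integral {a..b} (\<lambda>x. if x \<in> {p..q} then (1::real) else 0) \<le> q - p"
    by (auto simp: integrable_on_def integral_unique)
qed

lemma young_aux:
  fixes u g eta \<delta> :: real
  assumes "eta > 0" "g^2 \<le> \<delta>^2"
  shows "(u + g)^2 \<ge> (1 - eta) * u^2 - \<delta>^2 / eta"
proof -
  have "(u + g)^2 - ((1 - eta) * u^2 - g^2 / eta) = (eta*u + g)^2 / eta + g^2"
    using assms(1) by (simp add: field_simps power2_eq_square)
  moreover have "(eta*u + g)^2 / eta + g^2 \<ge> 0" using assms(1) by simp
  moreover have "g^2 / eta \<le> \<delta>^2 / eta" using assms by (simp add: divide_right_mono)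
  ultimately show ?thesis by linarith
qed

lemma real_cont: "continuous_on S (realization t1 t2 t3 t4)"
  unfolding realization_def[abs_def] by (intro continuous_intros)

lemma lowerbd:
  fixes a b \<rho> m \<epsilon> :: real and f :: "real \<Rightarrow> real"
  assumes ab: "a < b" and rp: "\<rho> > 0" and fc: "continuous_on {a..b} f"
    and ep: "\<epsilon> > 0"
    and md: "m = \<rho> * integral {a..b} (\<lambda>x. (f x - integral {a..b} f / (b - a))^2)"
    and rk: "risk a b \<rho> f t1 t2 t3 t4 \<le> m - \<epsilon>"
  shows "(t1 * t3)^2 \<ge> \<epsilon> * (\<epsilon> / (2 * (m + \<epsilon>))) / (2 * \<rho> * (b - a)^3)"
proof -
  define I0 where "I0 = integral {a..b} (\<lambda>x. (f x - integral {a..b} f / (b - a))^2)"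
  have I0nn: "I0 \<ge> 0" unfolding I0_def
    by (rule integral_nonneg) (rule integrable_continuous_interval, intro continuous_intros fc, simp)
  have m0: "m \<ge> 0" using md I0nn rp unfolding I0_def by simp
  define eta where "eta = \<epsilon> / (2 * (m + \<epsilon>))"
  have etap: "eta > 0" using ep m0 unfolding eta_def by simp
  have etam: "eta * m \<le> \<epsilon> / 2" using ep m0 unfolding eta_def by (simp add: field_simps)
  have etah: "eta \<le> 1/2" using ep m0 unfolding eta_def by (simp add: field_simps)
  define N where "N = realization t1 t2 t3 t4"
  define c where "c = N a"
  define \<delta> where "\<delta> = \<bar>t1 * t3\<bar> * (b - a)"
  have Nd: "(N x - c)^2 \<le> \<delta>^2" if "x \<in> {a..b}" for x
  proof -
    have mx: "\<bar>max (t1*x+t2) 0 - max (t1*a+t2) 0\<bar> \<le> \<bar>t1\<bar> * \<bar>x - a\<bar>"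
      by (auto simp: max_def abs_mult[symmetric] algebra_simps)
    have "\<bar>N x - c\<bar> = \<bar>t3\<bar> * \<bar>max (t1*x+t2) 0 - max (t1*a+t2) 0\<bar>"
      unfolding N_def c_def realization_def by (simp add: abs_mult[symmetric] algebra_simps)
    also have "\<dots> \<le> \<bar>t3\<bar> * (\<bar>t1\<bar> * \<bar>x - a\<bar>)" by (rule mult_left_mono[OF mx]) simp
    also have "\<dots> \<le> \<bar>t3\<bar> * (\<bar>t1\<bar> * (b - a))" using that
      by (intro mult_left_mono) auto
    also have "\<dots> = \<delta>" unfolding \<delta>_def by (simp add: abs_mult)
    finally show ?thesis by (metis abs_ge_zero power2_abs power_mono)
  qed
  have pw: "(N x - f x)^2 \<ge> (1 - eta) * (c - f x)^2 - \<delta>^2 / eta" if "x \<in> {a..b}" for x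
    using young_aux[OF etap Nd[OF that], of "c - f x"] by simp
  define J where "J = integral {a..b} (\<lambda>x. (c - f x)^2)"
  have J0: "I0 \<le> J" unfolding I0_def J_def by (rule var_lower[OF ab fc])
  have iJ: "(\<lambda>x. (c - f x)^2) integrable_on {a..b}"
    by (rule integrable_continuous_interval) (intro continuous_intros fc)
  have "integral {a..b} (\<lambda>x. (1 - eta) * (c - f x)^2 - \<delta>^2 / eta) = (1 - eta) * J - (b - a) * (\<delta>^2 / eta)"
  proof -
    have "integral {a..b} (\<lambda>x. (1 - eta) * (c - f x)^2 - \<delta>^2 / eta) = integral {a..b} (\<lambda>x. (1 - eta) * (c - f x)^2) - integral {a..b} (\<lambda>x. \<delta>^2 / eta)"
      by (rule integral_diff; rule integrable_continuous_interval, intro continuous_intros fc)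
    then show ?thesis using ab by (simp add: J_def content_real)
  qed
  moreover have "integral {a..b} (\<lambda>x. (1 - eta) * (c - f x)^2 - \<delta>^2 / eta) \<le> integral {a..b} (\<lambda>x. (N x - f x)^2)"
    apply (rule integral_le)
      apply (rule integrable_continuous_interval, intro continuous_intros fc)
     apply (rule integrable_continuous_interval, unfold N_def, intro continuous_intros fc real_cont)
    using pw unfolding N_def by blast
  ultimately have R: "(1 - eta) * J - (b - a) * (\<delta>^2 / eta) \<le> integral {a..b} (\<lambda>x. (N x - f x)^2)" by simp
  have rk': "\<rho> * integral {a..b} (\<lambda>x. (N x - f x)^2) \<le> \<rho> * I0 - \<epsilon>"
    using rk md unfolding risk_def N_def I0_def by simp
  have "\<rho> * ((1 - eta) * I0) \<le> \<rho> * ((1 - eta) * J)"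
    using J0 etah rp by (intro mult_left_mono) auto
  with R rk' have "\<rho> * ((1 - eta) * I0) - \<rho> * ((b - a) * (\<delta>^2 / eta)) \<le> \<rho> * I0 - \<epsilon>"
    using rp by (smt (verit, ccfv_SIG) mult_left_mono right_diff_distrib)
  then have "\<epsilon> - eta * m \<le> \<rho> * ((b - a) * (\<delta>^2 / eta))" using md unfolding I0_def by (simp add: algebra_simps)
  then have "\<epsilon> / 2 \<le> \<rho> * ((b - a) * (\<delta>^2 / eta))" using etam by linarith
  then have "\<epsilon> * eta \<le> 2 * \<rho> * (b - a) * \<delta>^2" using etap by (simp add: field_simps)
  also have "\<dots> = 2 * \<rho> * (b - a)^3 * (t1 * t3)^2" unfolding \<delta>_def
    by (simp add: power2_eq_square power3_eq_cube abs_mult_self_eq algebra_simps)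
  finally show ?thesis using rp ab unfolding eta_def[symmetric]
    by (simp add: field_simps)
qed


lemma upperbd:
  fixes a b \<rho> m \<epsilon> M :: real and f :: "real \<Rightarrow> real"
  assumes ab: "a < b" and rp: "\<rho> > 0" and fc: "continuous_on {a..b} f"
    and ep: "\<epsilon> > 0" and Mp: "M > 0" and fM: "\<And>x. x \<in> {a..b} \<Longrightarrow> \<bar>f x\<bar> \<le> M"
    and md: "m = \<rho> * integral {a..b} (\<lambda>x. (f x - integral {a..b} f / (b - a))^2)"
    and rk: "risk a b \<rho> f t1 t2 t3 t4 \<le> m - \<epsilon>"
  shows "\<bar>t1 * t3\<bar> \<le> 24 * \<rho> * M^3 / \<epsilon>"
proof (cases "t1 * t3 = 0")
  case True
  have "0 \<le> 24 * \<rho> * M^3 / \<epsilon>" using rp ep Mp by simp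
  then show ?thesis using True by (metis abs_zero)
next
  case False
  define K where "K = t1 * t3"
  have Kp: "\<bar>K\<bar> > 0" using False K_def by simp
  define d where "d = t3 * t2 + t4"
  define z where "z = - d / K"
  define r where "r = 3 * M / \<bar>K\<bar>"
  have r0: "r \<ge> 0" using Mp Kp unfolding r_def by simp
  define cs where "cs = max (- M) (min M t4)"
  define N where "N = realization t1 t2 t3 t4"
  define ind where "ind = (\<lambda>x::real. if x \<in> {z - r..z + r} then (1::real) else 0)"
  have pw: "(cs - f x)^2 - 4 * M^2 * ind x \<le> (N x - f x)^2" if xab: "x \<in> {a..b}" for x
  proof -
    have fx: "\<bar>f x\<bar> \<le> M" using fM xab .
    have v: "\<bar>cs - f x\<bar> \<le> 2 * M" using fx Mp unfolding cs_def by (auto simp: max_def min_def abs_if split: if_splits)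
    have v2: "(cs - f x)^2 \<le> 4 * M^2"
    proof -
      have "(cs - f x)^2 \<le> (2*M)^2" using v by (metis abs_ge_zero power2_abs power_mono)
      then show ?thesis by (simp add: power2_eq_square)
    qed
    have ind0: "ind x \<ge> 0" unfolding ind_def by simp
    show ?thesis
    proof (cases "t1 * x + t2 \<le> 0")
      case True
      then have "N x = t4" unfolding N_def realization_def by simp
      moreover have "\<bar>cs - f x\<bar> \<le> \<bar>t4 - f x\<bar>" using fx unfolding cs_def by (auto simp: max_def min_def abs_if split: if_splits)
      ultimately have "(cs - f x)^2 \<le> (N x - f x)^2"
        by (metis abs_ge_zero power2_abs power_mono)
      moreover have "0 \<le> 4 * M^2 * ind x" using ind0 by simp
      ultimately show ?thesis by linarith
    next
      case False
      then have Nx: "N x = K * x + d" unfolding N_def realization_def K_def d_def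
        by (simp add: algebra_simps)
      show ?thesis
      proof (cases "\<bar>K * x + d\<bar> > 3 * M")
        case True
        then have "\<bar>cs - f x\<bar> \<le> \<bar>N x - f x\<bar>" using Nx v fx abs_triangle_ineq2[of "N x" "f x"] by simp
        then have "(cs - f x)^2 \<le> (N x - f x)^2"
          by (metis abs_ge_zero power2_abs power_mono)
        moreover have "0 \<le> 4 * M^2 * ind x" using ind0 by simp
        ultimately show ?thesis by linarith
      next
        case False
        have "x - z = (K*x+d)/K" using Kp by (simp add: z_def field_simps)
        then have "\<bar>x - z\<bar> = \<bar>K * x + d\<bar> / \<bar>K\<bar>" by (simp add: abs_divide)
        also have "\<dots> \<le> r" unfolding r_def using False Kp by (simp add: divide_right_mono)
        finally have "x \<in> {z - r..z + r}" by (simp add: abs_le_iff; linarith)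
        then have "ind x = 1" unfolding ind_def by simp
        then have e1: "4 * M^2 * ind x = 4 * M^2" by simp
        have e2: "0 \<le> (N x - f x)^2" by simp
        show ?thesis using e1 e2 v2 by linarith
      qed
    qed
  qed
  have ii: "ind integrable_on {a..b}" "integral {a..b} ind \<le> (z + r) - (z - r)"
    unfolding ind_def using ind_integral[of "z - r" "z + r" a b] r0 by auto
  have iJ: "(\<lambda>x. (cs - f x)^2) integrable_on {a..b}"
    by (rule integrable_continuous_interval) (intro continuous_intros fc)
  have "integral {a..b} (\<lambda>x. (cs - f x)^2 - 4 * M^2 * ind x) = integral {a..b} (\<lambda>x. (cs - f x)^2) - 4 * M^2 * integral {a..b} ind"
    using integral_diff[OF iJ integrable_on_cmult_left[OF ii(1), of "4 * M^2"]] by simp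
  moreover have "integral {a..b} (\<lambda>x. (cs - f x)^2 - 4 * M^2 * ind x) \<le> integral {a..b} (\<lambda>x. (N x - f x)^2)"
    apply (rule integral_le)
      using integrable_diff[OF iJ integrable_on_cmult_left[OF ii(1), of "4 * M^2"]] apply simp
     apply (rule integrable_continuous_interval, unfold N_def, intro continuous_intros fc real_cont)
    using pw unfolding N_def by blast
  moreover have "integral {a..b} (\<lambda>x. (f x - integral {a..b} f / (b - a))^2) \<le> integral {a..b} (\<lambda>x. (cs - f x)^2)"
    by (rule var_lower[OF ab fc])
  moreover have "4 * M^2 * integral {a..b} ind \<le> 4 * M^2 * (2 * r)"
    using ii(2) by (intro mult_left_mono) auto
  ultimately have R: "integral {a..b} (\<lambda>x. (f x - integral {a..b} f / (b - a))^2) - 8 * M^2 * r \<le> integral {a..b} (\<lambda>x. (N x - f x)^2)"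
    by linarith
  have rk': "\<rho> * integral {a..b} (\<lambda>x. (N x - f x)^2) \<le> m - \<epsilon>"
    using rk unfolding risk_def N_def by simp
  have "\<rho> * (integral {a..b} (\<lambda>x. (f x - integral {a..b} f / (b - a))^2) - 8 * M^2 * r) \<le> \<rho> * integral {a..b} (\<lambda>x. (N x - f x)^2)"
    using R rp by (intro mult_left_mono) auto
  with rk' md have "\<epsilon> \<le> \<rho> * (8 * M^2 * r)" by (simp add: algebra_simps)
  also have "\<dots> = 24 * \<rho> * M^3 / \<bar>K\<bar>" unfolding r_def by (simp add: power2_eq_square power3_eq_cube)
  finally have "\<epsilon> * \<bar>K\<bar> \<le> 24 * \<rho> * M^3" using Kp by (simp add: field_simps)
  then show ?thesis unfolding K_def[symmetric] using ep by (simp add: field_simps)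
qed


theorem proposition5p8:
  fixes a b \<rho> m \<epsilon> :: real and f :: "real \<Rightarrow> real"
  assumes "a < b" and "\<rho> > 0" and "continuous_on {a..b} f"
    and "\<epsilon> > 0"
    and "m = \<rho> * integral {a..b} (\<lambda>x. (f x - integral {a..b} f / (b - a))^2)"
  shows "\<exists>C::real. C > 0 \<and> (\<forall>t1 t2 t3 t4 :: real.
           risk a b \<rho> f t1 t2 t3 t4 \<le> m - \<epsilon> \<longrightarrow>
             1 / C \<le> \<bar>t1 * t3\<bar> \<and> \<bar>t1 * t3\<bar> \<le> C)"
proof -
  note ab = assms(1) and rp = assms(2) and fc = assms(3) and ep = assms(4) and md = assms(5)
  have "compact (f ` {a..b})" by (rule compact_continuous_image[OF fc compact_Icc])
  then have "bounded (f ` {a..b})" by (rule compact_imp_bounded)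
  then obtain M where Mp: "M > 0" and fM0: "\<forall>y\<in>f ` {a..b}. norm y \<le> M"
    unfolding bounded_pos by blast
  have fM: "\<And>x. x \<in> {a..b} \<Longrightarrow> \<bar>f x\<bar> \<le> M" using fM0 by auto
  have I0nn: "integral {a..b} (\<lambda>x. (f x - integral {a..b} f / (b - a))^2) \<ge> 0"
    by (rule integral_nonneg) (rule integrable_continuous_interval, intro continuous_intros fc, simp)
  then have m0: "m \<ge> 0" using md rp by simp
  define L where "L = \<epsilon> * (\<epsilon> / (2 * (m + \<epsilon>))) / (2 * \<rho> * (b - a)^3)"
  have Lp: "L > 0" unfolding L_def using ep m0 rp ab by (intro divide_pos_pos mult_pos_pos) auto
  define U where "U = 24 * \<rho> * M^3 / \<epsilon>"
  define C where "C = max 1 (max (1 / L) U)"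
  have C1: "C \<ge> 1" and CL: "C \<ge> 1 / L" and CU: "C \<ge> U" unfolding C_def by auto
  show ?thesis
  proof (intro exI[of _ C] conjI allI impI)
    show "C > 0" using C1 by simp
    fix t1 t2 t3 t4
    assume rk: "risk a b \<rho> f t1 t2 t3 t4 \<le> m - \<epsilon>"
    have lo: "(t1 * t3)^2 \<ge> L" unfolding L_def by (rule lowerbd[OF ab rp fc ep md rk])
    have up: "\<bar>t1 * t3\<bar> \<le> U" unfolding U_def by (rule upperbd[OF ab rp fc ep Mp fM md rk])
    show "\<bar>t1 * t3\<bar> \<le> C" using up CU by simp
    show "1 / C \<le> \<bar>t1 * t3\<bar>"
    proof (rule ccontr)
      assume "\<not> 1 / C \<le> \<bar>t1 * t3\<bar>"
      then have lt: "\<bar>t1 * t3\<bar> < 1 / C" by simp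
      have "1 / C \<le> 1" using C1 by simp
      have "(t1 * t3)^2 = \<bar>t1 * t3\<bar> * \<bar>t1 * t3\<bar>" by (simp add: power2_eq_square abs_mult_self_eq)
      also have "\<dots> \<le> \<bar>t1 * t3\<bar> * 1" using lt \<open>1 / C \<le> 1\<close> by (intro mult_left_mono) auto
      also have "\<dots> < 1 / C" using lt by simp
      also have "1 / C \<le> 1 / (1 / L)" using CL Lp C1 by (intro divide_left_mono) auto
      also have "\<dots> = L" by simp
      finally show False using lo by simp
    qed
  qed
qed

end
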